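(* Let $d,N\in\mathbb{N}$, $\gamma_1,\dots,\gamma_N\in\mathbb{R}$, let $(\Omega,\mathcal{F},\mathbb{P})$ be a probability space, let $X_n\colon\Omega\to\mathbb{R}^d$, $n\in\{1,\dots,N\}$, be independent random variables, let $m\in\{1,\dots,N\}$ satisfy $\gamma_m\neq0$, and assume that $X_m$ is non-degenerate. Then $\sum_{n=1}^N\gamma_nX_n$ is non-degenerate.
   Context: For a Borel measure $\mu$ on $\mathbb{R}^d$, $\operatorname{supp}(\mu)=\{x\in\mathbb{R}^d\colon\mu(A)>0\text{ for every open }A\ni x\}$. For a random variable $X$, $\operatorname{supp}(X)=\operatorname{supp}(\mathbb{P}_X)$ where $\mathbb{P}_X$ is the law of $X$. $X$ is called non-degenerate if the interior of $\operatorname{supp}(X)$ is non-empty. *)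

theory Defs
  imports "HOL-Probability.Probability"
begin

definition measure_supp :: "'a::topological_space measure \<Rightarrow> 'a set" where
  "measure_supp \<mu> = {x. \<forall>A. open A \<and> x \<in> A \<longrightarrow> emeasure \<mu> A > 0}"

definition rv_supp :: "'w measure \<Rightarrow> ('w \<Rightarrow> 'a::topological_space) \<Rightarrow> 'a set" where
  "rv_supp M X = measure_supp (distr M borel X)"

definition non_degenerate :: "'w measure \<Rightarrow> ('w \<Rightarrow> 'a::topological_space) \<Rightarrow> bool" where
  "non_degenerate M X \<longleftrightarrow> interior (rv_supp M X) \<noteq> {}"

end

theory Submission
  imports Defs
begin

lemma supp_iff_prob:
  assumes P: "prob_space M" and Y: "Y \<in> borel_measurable M"
  shows "y \<in> rv_supp M Y \<longleftrightarrow> (\<forall>A. open A \<and> y \<in> A \<longrightarrow> measure M (Y -` A \<inter> space M) > 0)"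
proof -
  interpret prob_space M by fact
  have "emeasure (distr M borel Y) A = ennreal (measure M (Y -` A \<inter> space M))" if "open A" for A
    using that Y by (simp add: emeasure_distr emeasure_eq_measure)
  then show ?thesis
    unfolding rv_supp_def measure_supp_def by auto
qed

lemma supp_nonempty:
  fixes Y :: "'w \<Rightarrow> 'a::euclidean_space"
  assumes P: "prob_space M" and Y: "Y \<in> borel_measurable M"
  shows "\<exists>y. y \<in> rv_supp M Y"
proof (rule ccontr)
  interpret prob_space M by fact
  assume "\<not> ?thesis"
  then have "\<forall>y. \<exists>A. open A \<and> y \<in> A \<and> \<not> measure M (Y -` A \<inter> space M) > 0"
    using supp_iff_prob[OF P Y] by blast
  then obtain A where A: "\<And>y. open (A y) \<and> y \<in> A y \<and> measure M (Y -` A y \<inter> space M) = 0"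
    by (metis measure_nonneg order_less_le)
  let ?F = "range A"
  obtain F' where F': "F' \<subseteq> ?F" "countable F'" "\<Union>F' = \<Union>?F"
    using Lindelof[of ?F] A by blast
  have U: "\<Union>?F = UNIV" using A by blast
  have "(\<Union>B\<in>F'. Y -` B \<inter> space M) \<in> null_sets M"
  proof (rule null_sets_UN')
    show "countable F'" by fact
    fix B assume "B \<in> F'"
    then obtain y where "B = A y" using F' by blast
    then show "Y -` B \<inter> space M \<in> null_sets M"
      using A[of y] Y by (simp add: null_sets_def emeasure_eq_measure borel_open measurable_sets)
  qed
  moreover have "(\<Union>B\<in>F'. Y -` B \<inter> space M) = space M"
  proof (intro equalityI subsetI)
    fix \<omega> assume w: "\<omega> \<in> space M"
    have "Y \<omega> \<in> \<Union>F'" by (simp add: F'(3) U)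
    then obtain B where "B \<in> F'" "Y \<omega> \<in> B" by blast
    then show "\<omega> \<in> (\<Union>B\<in>F'. Y -` B \<inter> space M)" using w by (intro UN_I) auto
  qed auto
  ultimately have "space M \<in> null_sets M" by simp
  then have "emeasure M (space M) = 0" by (rule null_setsD1)
  then show False by (simp add: emeasure_space_1)
qed

theorem corollary6p12:
  fixes M :: "'w measure"
    and X :: "nat \<Rightarrow> 'w \<Rightarrow> 'a::euclidean_space"
    and \<gamma> :: "nat \<Rightarrow> real"
    and N m :: nat
  assumes "prob_space M"
    and "prob_space.indep_vars M (\<lambda>_. borel) X {1..N}"
    and "m \<in> {1..N}"
    and "\<gamma> m \<noteq> 0"
    and "non_degenerate M (X m)"
  shows "non_degenerate M (\<lambda>\<omega>. \<Sum>n\<in>{1..N}. \<gamma> n *\<^sub>R X n \<omega>)"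
proof -
  interpret prob_space M by fact
  define B where "B = {1..N} - {m}"
  define c where "c = \<gamma> m"
  define Z where "Z = X m"
  define Y where "Y = (\<lambda>\<omega>. \<Sum>n\<in>B. \<gamma> n *\<^sub>R X n \<omega>)"
  define S where "S = (\<lambda>\<omega>. \<Sum>n\<in>{1..N}. \<gamma> n *\<^sub>R X n \<omega>)"
  have meas: "X n \<in> borel_measurable M" if "n \<in> {1..N}" for n
    using assms(2) that by (auto simp: indep_vars_def)
  have Zm: "Z \<in> borel_measurable M" using meas assms(3) Z_def by auto
  have Ym: "Y \<in> borel_measurable M" unfolding Y_def B_def using meas by auto
  have Sm: "S \<in> borel_measurable M" unfolding S_def using meas by auto
  have Seq: "S \<omega> = c *\<^sub>R Z \<omega> + Y \<omega>" for \<omega>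
    unfolding S_def Y_def B_def c_def Z_def
    using sum.remove[of "{1..N}" m "\<lambda>n. \<gamma> n *\<^sub>R X n \<omega>"] assms(3) by simp
  have ind0: "indep_var (PiM {m} (\<lambda>_. borel)) (\<lambda>\<omega>. restrict (\<lambda>i. X i \<omega>) {m})
      (PiM B (\<lambda>_. borel)) (\<lambda>\<omega>. restrict (\<lambda>i. X i \<omega>) B)"
    by (rule indep_var_restrict[OF assms(2)]) (use assms(3) in \<open>auto simp: B_def\<close>)
  have ind1: "indep_var borel ((\<lambda>f. f m) \<circ> (\<lambda>\<omega>. restrict (\<lambda>i. X i \<omega>) {m}))
      borel ((\<lambda>f. \<Sum>n\<in>B. \<gamma> n *\<^sub>R f n) \<circ> (\<lambda>\<omega>. restrict (\<lambda>i. X i \<omega>) B))"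
    by (rule indep_var_compose[OF ind0]) auto
  have ind: "indep_var borel Z borel Y"
  proof -
    have "((\<lambda>f. f m) \<circ> (\<lambda>\<omega>. restrict (\<lambda>i. X i \<omega>) {m})) = Z"
      by (auto simp: Z_def)
    moreover have "((\<lambda>f. \<Sum>n\<in>B. \<gamma> n *\<^sub>R f n) \<circ> (\<lambda>\<omega>. restrict (\<lambda>i. X i \<omega>) B)) = Y"
      by (auto simp: Y_def intro!: sum.cong)
    ultimately show ?thesis using ind1 by simp
  qed
  obtain x0 where "x0 \<in> interior (rv_supp M Z)"
    using assms(5) by (auto simp: non_degenerate_def Z_def)
  then obtain r where r: "r > 0" "ball x0 r \<subseteq> rv_supp M Z"
    by (meson mem_interior)
  obtain y where y: "y \<in> rv_supp M Y" using supp_nonempty[OF assms(1) Ym] by blast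
  have c0: "c \<noteq> 0" using assms(4) c_def by simp
  have "ball (c *\<^sub>R x0 + y) (\<bar>c\<bar> * r) \<subseteq> rv_supp M S"
  proof
    fix p assume p: "p \<in> ball (c *\<^sub>R x0 + y) (\<bar>c\<bar> * r)"
    define x' where "x' = (1/c) *\<^sub>R (p - y)"
    have px: "p = c *\<^sub>R x' + y" using c0 by (simp add: x'_def)
    have "dist x' x0 = dist (c *\<^sub>R x') (c *\<^sub>R x0) / \<bar>c\<bar>"
      using c0 by (simp add: dist_norm scaleR_diff_right[symmetric])
    also have "dist (c *\<^sub>R x') (c *\<^sub>R x0) = dist p (c *\<^sub>R x0 + y)"
      by (simp add: px dist_norm)
    finally have "dist x' x0 < r" using p c0
      by (simp add: dist_commute divide_less_eq mult.commute)
    then have x'S: "x' \<in> rv_supp M Z" using r by (auto simp: dist_commute)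
    show "p \<in> rv_supp M S"
      unfolding supp_iff_prob[OF assms(1) Sm]
    proof safe
      fix A assume A: "open A" "p \<in> A"
      then obtain e where e: "e > 0" "ball p e \<subseteq> A" by (meson openE)
      define U where "U = ball x' (e / (2 * \<bar>c\<bar>))"
      define V where "V = ball y (e / 2)"
      have pU: "measure M (Z -` U \<inter> space M) > 0"
        using x'S e c0 unfolding supp_iff_prob[OF assms(1) Zm] U_def by auto
      have pV: "measure M (Y -` V \<inter> space M) > 0"
        using y e unfolding supp_iff_prob[OF assms(1) Ym] V_def by auto
      have eq: "measure M ((\<lambda>\<omega>. (Z \<omega>, Y \<omega>)) -` (U \<times> V) \<inter> space M)
          = measure M (Z -` U \<inter> space M) * measure M (Y -` V \<inter> space M)"
        by (rule indep_varD[OF ind]) (auto simp: U_def V_def)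
      have sub: "(\<lambda>\<omega>. (Z \<omega>, Y \<omega>)) -` (U \<times> V) \<inter> space M \<subseteq> S -` A \<inter> space M"
      proof (intro subsetI)
        fix \<omega> assume w0: "\<omega> \<in> (\<lambda>\<omega>. (Z \<omega>, Y \<omega>)) -` (U \<times> V) \<inter> space M"
        then have w: "(Z \<omega>, Y \<omega>) \<in> U \<times> V" by simp
        have h1: "dist (S \<omega>) p \<le> dist (c *\<^sub>R Z \<omega>) (c *\<^sub>R x') + dist (Y \<omega>) y"
          unfolding Seq px by (rule dist_triangle_add)
        have h2: "dist (c *\<^sub>R Z \<omega>) (c *\<^sub>R x') = \<bar>c\<bar> * dist (Z \<omega>) x'"
          by (simp add: dist_norm scaleR_diff_right[symmetric])
        have h3: "\<bar>c\<bar> * dist (Z \<omega>) x' < e / 2"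
          using w c0 by (simp add: U_def dist_commute less_divide_eq mult_ac)
        have h4: "dist (Y \<omega>) y < e / 2" using w by (simp add: V_def dist_commute)
        have "dist (S \<omega>) p < e" using h1 h2 h3 h4 by linarith
        then show "\<omega> \<in> S -` A \<inter> space M" using e w0 by (auto simp: dist_commute)
      qed
      have "S -` A \<inter> space M \<in> sets M" using Sm A by (simp add: borel_open measurable_sets)
      then have "measure M ((\<lambda>\<omega>. (Z \<omega>, Y \<omega>)) -` (U \<times> V) \<inter> space M) \<le> measure M (S -` A \<inter> space M)"
        using sub by (intro finite_measure_mono) auto
      moreover have "measure M ((\<lambda>\<omega>. (Z \<omega>, Y \<omega>)) -` (U \<times> V) \<inter> space M) > 0"
        using eq pU pV by simp
      ultimately show "measure M (S -` A \<inter> space M) > 0" by linarith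
    qed
  qed
  moreover have "\<bar>c\<bar> * r > 0" using c0 r by simp
  ultimately have "c *\<^sub>R x0 + y \<in> interior (rv_supp M S)"
    by (meson centre_in_ball interior_maximal open_ball subsetD)
  then show ?thesis unfolding non_degenerate_def S_def by blast
qed

end
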